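(* Let $T(x)=1+\sum_{n\ge1}t_nx^n$ be the cluster generating function for the consecutive pattern $15243$ (defined in the context). Then $T$ satisfies \[x^3T'(x) = 1 + x - T\!\left(\frac{x}{1+x^2}\right),\] with $T(0)=1$.
   Context: For a consecutive pattern $\sigma$ of length $m$ (here $\sigma=15243$, $m=5$): an occurrence of $\sigma$ in a permutation is a block of $m$ consecutive positions whose entries are in the same relative order as $\sigma$. A $k$-cluster of length $n\ge m$ is a permutation of $\{1,\dots,n\}$ containing precisely $k$ occurrences of $\sigma$, such that every entry belongs to at least one occurrence and any two successive occurrences overlap in at least one position. Let $s_{n,k}$ be the number of $k$-clusters of length $n$, with $s_{1,0}=1$ and $s_{n,k}=0$ otherwise for $n<m$; set $t_n=\sum_k(-1)^ks_{n,k}$ and $T(x)=1+\sum_{n\ge1}t_nx^n$. *)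

theory Defs
  imports "HOL-Computational_Algebra.Formal_Power_Series"
begin

definition sigma :: "nat list" where "sigma = [1,5,2,4,3]"

definition occ :: "nat list \<Rightarrow> nat \<Rightarrow> bool" where
  "occ p i \<longleftrightarrow> i + length sigma \<le> length p \<and>
     (\<forall>a < length sigma. \<forall>b < length sigma. p ! (i + a) < p ! (i + b) \<longleftrightarrow> sigma ! a < sigma ! b)"

definition is_cluster :: "nat \<Rightarrow> nat list \<Rightarrow> nat set \<Rightarrow> bool" where
  "is_cluster n p S \<longleftrightarrow>
     distinct p \<and> set p = {1..n} \<and>
     (\<forall>i\<in>S. occ p i) \<and>
     (\<forall>j<n. \<exists>i\<in>S. i \<le> j \<and> j < i + length sigma) \<and>
     (\<forall>i\<in>S. \<forall>i'\<in>S. i < i' \<and> (\<forall>l\<in>S. \<not> (i < l \<and> l < i')) \<longrightarrow> i' < i + length sigma)"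

definition s :: "nat \<Rightarrow> nat \<Rightarrow> nat" where
  "s n k = (if n < length sigma then (if n = 1 \<and> k = 0 then 1 else 0)
            else card {(p, S). is_cluster n p S \<and> card S = k})"

definition t :: "nat \<Rightarrow> int" where
  "t n = (\<Sum>k\<le>n. (-1) ^ k * int (s n k))"

definition T :: "real fps" where
  "T = Abs_fps (\<lambda>n. if n = 0 then 1 else of_int (t n))"

end

theory Submission
  imports Defs
begin


lemma occ_iff: "occ p i \<longleftrightarrow> i + 5 \<le> length p \<and> p!i < p!(i+2) \<and> p!(i+2) < p!(i+4) \<and> p!(i+4) < p!(i+3) \<and> p!(i+3) < p!(i+1)"
  unfolding occ_def sigma_def
  apply (simp add: eval_nat_numeral less_Suc_eq all_conj_distrib)
  apply safe
  apply simp_all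
  done

lemma occ_gap1: "occ p i \<Longrightarrow> occ p (i+1) \<Longrightarrow> False"
  unfolding occ_iff by (simp add: numeral_eq_Suc)

lemma occ_gap3: "occ p i \<Longrightarrow> occ p (i+3) \<Longrightarrow> False"
  unfolding occ_iff by (simp add: numeral_eq_Suc)

lemma occ_min: "occ p i \<Longrightarrow> d < 5 \<Longrightarrow> p!i \<le> p!(i+d)"
  by (auto simp: occ_iff less_Suc_eq eval_nat_numeral)

lemma occ_len: "occ p i \<Longrightarrow> i + 5 \<le> length p"
  by (simp add: occ_iff)

definition cc :: "nat list \<Rightarrow> nat set \<Rightarrow> bool" where
 "cc p S \<longleftrightarrow> (\<forall>i\<in>S. occ p i) \<and> (\<forall>j<length p. \<exists>i\<in>S. i \<le> j \<and> j < i + 5) \<and>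
    (\<forall>i\<in>S. \<forall>i'\<in>S. i < i' \<and> (\<forall>l\<in>S. \<not> (i < l \<and> l < i')) \<longrightarrow> i' < i + 5)"

lemma length_sigma[simp]: "length sigma = 5" by (simp add: sigma_def)

lemma is_cluster_iff: "is_cluster n p S \<longleftrightarrow> distinct p \<and> set p = {1..n} \<and> cc p S"
proof -
  have "distinct p \<Longrightarrow> set p = {1..n} \<Longrightarrow> length p = n"
    by (metis card_atLeastAtMost diff_Suc_1 distinct_card)
  then show ?thesis unfolding is_cluster_def cc_def by auto
qed

lemma cc_S_bound: "cc p S \<Longrightarrow> S \<subseteq> {..<length p}"
  unfolding cc_def using occ_len by fastforce

lemma cc_len: "cc p S \<Longrightarrow> length p \<ge> 1 \<Longrightarrow> length p \<ge> 5"
  unfolding cc_def using occ_len by fastforce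

lemma cc_0: "cc p S \<Longrightarrow> length p \<ge> 1 \<Longrightarrow> 0 \<in> S"
  unfolding cc_def by fastforce

lemma cc_min_S: assumes "cc p S" "length p \<ge> 1" shows "i \<in> S \<Longrightarrow> p!0 \<le> p!i"
proof (induction i rule: less_induct)
  case (less i)
  show ?case
  proof (cases "i = 0")
    case True then show ?thesis by simp
  next
    case False
    have z: "0 \<in> S" using cc_0 assms by blast
    let ?L = "{l\<in>S. l < i}"
    have fin: "finite ?L" by simp
    have ne: "?L \<noteq> {}" using z False by auto
    define i0 where "i0 = Max ?L"
    have i0L: "i0 \<in> ?L" unfolding i0_def using fin ne Max_in by blast
    have nb: "\<forall>l\<in>S. \<not> (i0 < l \<and> l < i)"
    proof (intro ballI notI)
      fix l assume "l \<in> S" "i0 < l \<and> l < i"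
      then have "l \<le> i0" unfolding i0_def using Max_ge[OF fin] by blast
      then show False using \<open>i0 < l \<and> l < i\<close> by simp
    qed
    have "i < i0 + 5" using assms(1) i0L nb less.prems unfolding cc_def by blast
    define d where "d = i - i0"
    have d: "i = i0 + d" "d < 5" using i0L \<open>i < i0 + 5\<close> by (auto simp: d_def)
    have "occ p i0" using assms(1) i0L unfolding cc_def by blast
    then have "p!i0 \<le> p!i" using occ_min d by blast
    moreover have "p!0 \<le> p!i0" using less.IH i0L by blast
    ultimately show ?thesis by simp
  qed
qed

lemma cc_min: assumes "cc p S" "j < length p" shows "p!0 \<le> p!j"
proof -
  obtain i where i: "i\<in>S" "i \<le> j" "j < i + 5" using assms unfolding cc_def by blast
  define d where "d = j - i"
  have d: "j = i + d" "d < 5" using i by (auto simp: d_def)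
  have "occ p i" using assms i unfolding cc_def by blast
  then have "p!i \<le> p!j" using occ_min d by blast
  moreover have "p!0 \<le> p!i" using cc_min_S assms i by fastforce
  ultimately show ?thesis by simp
qed

lemma occ_map: assumes "strict_mono_on (set p) f" shows "occ (map f p) i \<longleftrightarrow> occ p i"
proof (cases "i + 5 \<le> length p")
  case True
  have "a < 5 \<Longrightarrow> b < 5 \<Longrightarrow> (map f p ! (i+a) < map f p ! (i+b) \<longleftrightarrow> p!(i+a) < p!(i+b))" for a b
    using strict_mono_on_less[OF assms] True by (simp add: nth_mem)
  then show ?thesis unfolding occ_def using True by simp
next
  case False
  then show ?thesis unfolding occ_def by simp
qed

lemma cc_map: assumes "strict_mono_on (set p) f" shows "cc (map f p) S \<longleftrightarrow> cc p S"
  unfolding cc_def using occ_map[OF assms] by simp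

definition OKW :: "nat set \<Rightarrow> (nat list \<times> nat set) set" where
  "OKW W = {(r,S). distinct r \<and> set r = W \<and> ((length r = 1 \<and> S = {}) \<or> cc r S)}"

definition sg :: "(nat list \<times> nat set) set \<Rightarrow> int" where
  "sg A = (\<Sum>x\<in>A. (-1::int)^card (snd x))"

lemma OKW_finite: assumes "finite W" shows "finite (OKW W)"
proof -
  have "OKW W \<subseteq> {r. set r \<subseteq> W \<and> length r = card W} \<times> Pow {..<card W}"
    unfolding OKW_def using cc_S_bound distinct_card by fastforce
  moreover have "finite ({r. set r \<subseteq> W \<and> length r = card W} \<times> Pow {..<card W})"
    using assms finite_lists_length_eq by blast
  ultimately show ?thesis using finite_subset by blast
qed

lemma sg_mono_bij: assumes "bij_betw f A B" "strict_mono_on A f"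
  shows "sg (OKW A) = sg (OKW B)"
proof -
  let ?h = "\<lambda>(r::nat list, S::nat set). (map f r, S)"
  have "bij_betw ?h (OKW A) (OKW B)"
  proof (rule bij_betw_imageI)
    show "inj_on ?h (OKW A)"
    proof (rule inj_onI)
      fix x y assume xy: "x \<in> OKW A" "y \<in> OKW A" "?h x = ?h y"
      obtain r1 S1 where x: "x = (r1,S1)" "set r1 = A" using xy(1) unfolding OKW_def by auto
      obtain r2 S2 where y: "y = (r2,S2)" "set r2 = A" using xy(2) unfolding OKW_def by auto
      have "map f r1 = map f r2" "S1 = S2" using xy(3) x y by auto
      moreover have "inj_on f (set r1 \<union> set r2)" using x y assms(1) by (simp add: bij_betw_def)
      ultimately show "x = y" using x y inj_on_map_eq_map by blast
    qed
  next
    let ?g = "the_inv_into A f"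
    have gb: "bij_betw ?g B A" using assms(1) bij_betw_the_inv_into by blast
    have gm: "strict_mono_on B ?g"
    proof (rule strict_mono_onI)
      fix x y assume xy: "x \<in> B" "y \<in> B" "x < y"
      have "?g x \<in> A" "?g y \<in> A" using gb xy bij_betwE by blast+
      moreover have "f (?g x) = x" "f (?g y) = y" using assms(1) xy
        by (meson bij_betw_def f_the_inv_into_f_bij_betw)+
      ultimately show "?g x < ?g y" using strict_mono_on_less[OF assms(2)] xy
        by (metis linorder_neqE_nat not_less_iff_gr_or_eq)
    qed
    have fg: "x \<in> B \<Longrightarrow> f (?g x) = x" for x using assms(1) by (meson f_the_inv_into_f_bij_betw)
    show "?h ` OKW A = OKW B"
    proof
      show "?h ` OKW A \<subseteq> OKW B"
      proof
        fix y assume "y \<in> ?h ` OKW A"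
        then obtain r S where rS: "(r,S) \<in> OKW A" "y = (map f r, S)" by auto
        have sm: "strict_mono_on (set r) f" using rS(1) assms(2) unfolding OKW_def by auto
        have inj: "inj_on f (set r)" and sr: "set r = A" and dr: "distinct r"
          and c: "(length r = 1 \<and> S = {}) \<or> cc r S"
          using rS(1) assms(1) unfolding OKW_def bij_betw_def by auto
        have "distinct (map f r)" using inj dr by (simp add: distinct_map)
        moreover have "set (map f r) = B" using sr assms(1) by (simp add: bij_betw_def)
        moreover have "(length (map f r) = 1 \<and> S = {}) \<or> cc (map f r) S" using c cc_map[OF sm] by simp
        ultimately show "y \<in> OKW B" unfolding OKW_def using rS(2) by simp
      qed
    next
      show "OKW B \<subseteq> ?h ` OKW A"
      proof
        fix y assume y: "y \<in> OKW B"
        then obtain r S where rS: "y = (r,S)" "distinct r" "set r = B" "(length r = 1 \<and> S = {}) \<or> cc r S"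
          unfolding OKW_def by auto
        let ?r = "map ?g r"
        have e: "map f ?r = r" unfolding map_map by (rule map_idI) (use fg rS(3) in auto)
        have sr: "set ?r = A" using gb rS(3) by (simp add: bij_betw_def)
        have "inj_on ?g B" using gb bij_betw_def by blast
        then have dr: "distinct ?r" using rS by (simp add: distinct_map)
        have sm: "strict_mono_on (set ?r) f" using sr assms(2) by simp
        have ce: "cc r S = cc ?r S" using cc_map[OF sm, of S] unfolding e .
        have "length ?r = length r" by simp
        then have "(length ?r = 1 \<and> S = {}) \<or> cc ?r S" using rS(4) ce by metis
        then have "(?r, S) \<in> OKW A" using dr sr unfolding OKW_def by auto
        then show "y \<in> ?h ` OKW A" using e rS(1) by force
      qed
    qed
  qed
  then have "(\<Sum>x\<in>OKW A. (-1::int)^card (snd (?h x))) = sg (OKW B)" unfolding sg_def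
    by (rule sum.reindex_bij_betw)
  moreover have "(\<Sum>x\<in>OKW A. (-1::int)^card (snd (?h x))) = sg (OKW A)" unfolding sg_def
    by (simp only: snd_conv split_beta)
  ultimately show ?thesis by simp
qed


lemma sorted_bij: assumes "finite W" "card W = m"
  shows "bij_betw (\<lambda>i. sorted_list_of_set W ! (i - 1)) {1..m} W"
    and "strict_mono_on {1..m} (\<lambda>i. sorted_list_of_set W ! (i - 1))"
proof -
  let ?L = "sorted_list_of_set W"
  have len: "length ?L = m" using assms by simp
  have b1: "bij_betw (\<lambda>i. i - 1) {1..m} {..<m}"
    by (rule bij_betw_byWitness[where f'="\<lambda>i. i + 1"]) auto
  have b2: "bij_betw ((!) ?L) {..<m} W"
    by (rule bij_betw_nth) (use assms len in auto)
  show "bij_betw (\<lambda>i. ?L ! (i - 1)) {1..m} W"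
    using bij_betw_trans[OF b1 b2] by (simp add: comp_def)
  have ss: "sorted_wrt (<) ?L" using strict_sorted_list_of_set by blast
  show "strict_mono_on {1..m} (\<lambda>i. ?L ! (i - 1))"
  proof (rule strict_mono_onI)
    fix x y assume "x \<in> {1..m}" "y \<in> {1..m}" "x < y"
    then show "?L ! (x - 1) < ?L ! (y - 1)" using sorted_wrt_nth_less[OF ss] len by auto
  qed
qed

lemma sg_card: assumes "finite W" "card W = m" shows "sg (OKW W) = sg (OKW {1..m})"
  using sg_mono_bij[OF sorted_bij[OF assms]] by simp

definition CL :: "nat \<Rightarrow> (nat list \<times> nat set) set" where
  "CL n = {(p,S). is_cluster n p S}"

lemma CL_finite: "finite (CL n)"
proof -
  have "CL n \<subseteq> OKW {1..n}" unfolding CL_def OKW_def is_cluster_iff by auto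
  then show ?thesis using OKW_finite finite_subset by blast
qed

lemma t_CL: assumes "n \<ge> 5" shows "t n = sg (CL n)"
proof -
  have bnd: "x \<in> CL n \<Longrightarrow> card (snd x) \<le> n" for x
  proof -
    assume x: "x \<in> CL n"
    then obtain p S where "x = (p,S)" "is_cluster n p S" unfolding CL_def by auto
    then have "S \<subseteq> {..<length p}" "length p = n"
      using cc_S_bound unfolding is_cluster_iff
      by (auto, metis card_atLeastAtMost diff_Suc_1 distinct_card)
    then show ?thesis using \<open>x = (p,S)\<close> by (metis card_lessThan card_mono finite_lessThan less_imp_le_nat order_le_less_trans snd_conv card_mono[of "{..<n}"] le_less)
  qed
  have "sg (CL n) = (\<Sum>k\<in>{..n}. \<Sum>x\<in>{x. x \<in> CL n \<and> card (snd x) = k}. (-1::int)^card (snd x))"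
    unfolding sg_def by (rule sum.group[symmetric]) (use CL_finite bnd in auto)
  also have "\<dots> = (\<Sum>k\<in>{..n}. (-1)^k * int (card {x. x \<in> CL n \<and> card (snd x) = k}))"
    by (rule sum.cong) auto
  also have "\<dots> = t n"
    unfolding t_def s_def using assms
    by (intro sum.cong) (auto simp: CL_def case_prod_beta intro!: arg_cong[where f=card])
  finally show ?thesis by simp
qed

lemma t_small: "t 0 = 0" "t 1 = 1" "t 2 = 0" "t 3 = 0" "t 4 = 0"
  by (simp_all add: t_def s_def)

lemma OKW_small: assumes "m \<in> {2,3,4}" shows "OKW {1..m} = {}"
proof -
  have "(r,S) \<notin> OKW {1..m}" for r S
  proof
    assume "(r,S) \<in> OKW {1..m}"
    then have "distinct r" "set r = {1..m}" "(length r = 1 \<and> S = {}) \<or> cc r S" unfolding OKW_def by auto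
    moreover have "length r = m" using calculation by (metis card_atLeastAtMost diff_Suc_1 distinct_card)
    ultimately show False using cc_len assms by fastforce
  qed
  then show ?thesis by auto
qed

lemma OKW_one: "OKW {1..1} = {([1],{})}"
proof -
  have "(r,S) \<in> OKW {1..1} \<longleftrightarrow> (r,S) = ([1],{})" for r S
  proof
    assume "(r,S) \<in> OKW {1..1}"
    then have d: "distinct r" "set r = {1}" "(length r = 1 \<and> S = {}) \<or> cc r S" unfolding OKW_def by auto
    moreover have "length r = 1" using calculation by (metis card_1_singleton_iff distinct_card is_singletonI is_singleton_altdef)
    ultimately have "S = {}" using cc_len by fastforce
    moreover have "r = [1]" using d \<open>length r = 1\<close> by (cases r) auto
    ultimately show "(r,S) = ([1],{})" by simp
  next
    assume "(r,S) = ([1],{})" then show "(r,S) \<in> OKW {1..1}" unfolding OKW_def by auto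
  qed
  then show ?thesis by auto
qed

lemma OKW_big: assumes "m \<ge> 5" shows "OKW {1..m} = CL m"
proof -
  have "distinct r \<Longrightarrow> set r = {1..m} \<Longrightarrow> length r = m" for r
    by (metis card_atLeastAtMost diff_Suc_1 distinct_card)
  then show ?thesis unfolding OKW_def CL_def is_cluster_iff using assms by auto
qed

lemma sg_OKW: assumes "finite W" "card W = m" "m \<ge> 1" shows "sg (OKW W) = t m"
proof -
  have "sg (OKW W) = sg (OKW {1..m})" using sg_card assms by blast
  moreover have "sg (OKW {1..m}) = t m"
  proof -
    consider "m = 1" | "m \<in> {2,3,4}" | "m \<ge> 5" using assms(3) by force
    then show ?thesis
    proof cases
      case 1 then show ?thesis using OKW_one t_small by (simp add: sg_def)
    next
      case 2 then show ?thesis using OKW_small t_small by (auto simp: sg_def)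
    next
      case 3 then show ?thesis using OKW_big t_CL by simp
    qed
  qed
  ultimately show ?thesis by simp
qed




lemma occ_append: "occ (xs @ ys) (length xs + i) \<longleftrightarrow> occ ys i"
  unfolding occ_def by (simp add: nth_append add.assoc)

definition blk :: "nat \<Rightarrow> nat set \<Rightarrow> nat list" where
 "blk a U = map (\<lambda>i. if even i then i div 2 + 1 else rev (sorted_list_of_set U) ! (i div 2)) [0..<2*a+2]"

definition E :: "nat \<Rightarrow> nat set" where "E a = (\<lambda>j. 2*j) ` {..<a}"

definition blkof :: "nat set \<Rightarrow> nat" where "blkof S = (LEAST a. 2*a \<notin> S)"

lemma length_blk[simp]: "length (blk a U) = 2*a+2" by (simp add: blk_def)

lemma blk_nth0: "i < 2*a+2 \<Longrightarrow> blk a U ! i = (if even i then i div 2 + 1 else rev (sorted_list_of_set U) ! (i div 2))"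
  unfolding blk_def by (simp del: upt_Suc)

lemma blk_even: "j \<le> a \<Longrightarrow> blk a U ! (2*j) = j+1"
  by (simp add: blk_nth0)

lemma blk_odd: "j \<le> a \<Longrightarrow> blk a U ! (2*j+1) = rev (sorted_list_of_set U) ! j"
  by (simp add: blk_nth0)

definition LL :: "nat set \<Rightarrow> nat list" where "LL U = rev (sorted_list_of_set U)"

context
  fixes a :: nat and U :: "nat set"
  assumes fO: "finite U" and cO: "card U = a+1"
begin


lemma LL_len: "length (LL U) = a+1" using cO by (simp add: LL_def)
lemma LL_set: "set (LL U) = U" using fO by (simp add: LL_def)
lemma LL_dist: "distinct (LL U)" by (simp add: LL_def)
lemma LL_dec: assumes "j < k" "k \<le> a" shows "LL U!k < LL U!j"
proof -
  let ?S = "sorted_list_of_set U"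
  have ls: "length ?S = a+1" using cO by simp
  have ss: "sorted_wrt (<) ?S" using strict_sorted_list_of_set by blast
  have "LL U!k = ?S ! (a - k)" "LL U!j = ?S ! (a - j)" using assms ls by (auto simp: LL_def rev_nth)
  moreover have "?S ! (a - k) < ?S ! (a - j)" using sorted_wrt_nth_less[OF ss] assms ls by auto
  ultimately show ?thesis by simp
qed

lemma blk_odd': "j \<le> a \<Longrightarrow> blk a U ! (2*j+1) = LL U ! j"
  using blk_odd LL_def by simp

lemma blk_nth: "i < 2*a+2 \<Longrightarrow> blk a U ! i = (if even i then i div 2 + 1 else LL U ! (i div 2))"
  by (simp add: blk_nth0 LL_def)

lemma set_blk: "set (blk a U) = {1..a+1} \<union> U"
proof
  show "set (blk a U) \<subseteq> {1..a+1} \<union> U"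
  proof
    fix v assume "v \<in> set (blk a U)"
    then obtain i where i: "i < 2*a+2" "v = blk a U ! i" by (auto simp: in_set_conv_nth)
    show "v \<in> {1..a+1} \<union> U"
    proof (cases "even i")
      case True then show ?thesis using i blk_nth by auto
    next
      case False
      then have "i div 2 < length (LL U)" using i LL_len by auto
      then show ?thesis using i blk_nth False LL_set nth_mem by fastforce
    qed
  qed
next
  show "{1..a+1} \<union> U \<subseteq> set (blk a U)"
  proof
    fix v assume v: "v \<in> {1..a+1} \<union> U"
    show "v \<in> set (blk a U)"
    proof (cases "v \<in> U")
      case True
      then obtain j where j: "j < a+1" "v = LL U ! j" using LL_set LL_len by (metis in_set_conv_nth)
      then have "blk a U ! (2*j+1) = v" using blk_odd' by simp
      moreover have "2*j+1 < length (blk a U)" using j by simp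
      ultimately show ?thesis by (metis nth_mem)
    next
      case False
      then have "v \<ge> 1" "v \<le> a+1" using v by auto
      then have "blk a U ! (2*(v-1)) = v" using blk_even[of "v-1" a U] by simp
      moreover have "2*(v-1) < length (blk a U)" using \<open>v \<le> a+1\<close> by simp
      ultimately show ?thesis by (metis nth_mem)
    qed
  qed
qed

lemma dist_blk: assumes "U \<subseteq> {a+3..}" shows "distinct (blk a U)"
proof -
  have lo: "j \<le> a \<Longrightarrow> LL U ! j \<ge> a+3" for j using LL_set LL_len assms
    by (metis Suc_eq_plus1 atLeast_iff le_imp_less_Suc nth_mem subsetD)
  show ?thesis unfolding distinct_conv_nth
  proof (intro allI impI)
    fix i j assume ij: "i < length (blk a U)" "j < length (blk a U)" "i \<noteq> j"
    then have ij': "i < 2*a+2" "j < 2*a+2" "i div 2 \<le> a" "j div 2 \<le> a" by auto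
    show "blk a U ! i \<noteq> blk a U ! j"
    proof (cases "even i"; cases "even j")
      assume "even i" "even j" then show ?thesis using ij ij' blk_nth by auto
    next
      assume "even i" "odd j" then show ?thesis using ij' blk_nth lo[of "j div 2"] by auto
    next
      assume "odd i" "even j" then show ?thesis using ij' blk_nth lo[of "i div 2"] by auto
    next
      assume o: "odd i" "odd j"
      then have "i div 2 \<noteq> j div 2" using ij(3) by (metis dvd_mult_div_cancel odd_two_times_div_two_succ)
      moreover have "i div 2 < length (LL U)" "j div 2 < length (LL U)" using ij' LL_len by auto
      ultimately have "LL U ! (i div 2) \<noteq> LL U ! (j div 2)" using LL_dist nth_eq_iff_index_eq by blast
      then show ?thesis using o ij' blk_nth by auto
    qed
  qed
qed

end


definition shS :: "nat \<Rightarrow> nat set \<Rightarrow> nat set" where "shS a S' = (\<lambda>i. i + (2*a+2)) ` S'"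

lemma LL_big: assumes "U \<subseteq> {a+3..n}" "card U = a+1" "j \<le> a" shows "a+3 \<le> LL U ! j"
proof -
  have "finite U" using assms(1) finite_subset by blast
  then have "LL U ! j \<in> U" using LL_set LL_len assms by (metis Suc_eq_plus1 le_imp_less_Suc nth_mem)
  then show ?thesis using assms(1) by auto
qed

lemma Phi_fwd:
  assumes a1: "1 \<le> a" and an: "2*a+3 \<le> n" and U: "U \<subseteq> {a+3..n}" "card U = a+1"
    and rS: "(r,S') \<in> OKW ({a+2..n} - U)"
  shows "is_cluster n (blk a U @ r) (E a \<union> shS a S')" "blkof (E a \<union> shS a S') = a"
proof -
  have fU: "finite U" using U(1) finite_subset by blast
  define q where "q = 2*a+2"
  define p where "p = blk a U @ r"
  define W where "W = {a+2..n} - U"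
  define S where "S = E a \<union> shS a S'"
  have UW: "U \<subseteq> {a+2..n}" using U by auto
  have cW: "card W = n - q"
    unfolding W_def q_def using card_Diff_subset[OF fU UW] U(2) an by simp
  have dr: "distinct r" and sr: "set r = W" and cr: "(length r = 1 \<and> S' = {}) \<or> cc r S'"
    using rS unfolding OKW_def W_def by auto
  have lr: "length r = n - q" using distinct_card dr sr cW by metis
  have lp: "length p = n" using lr an by (simp add: p_def q_def)
  have lq: "length (blk a U) = q" by (simp add: q_def)
  have a2W: "a+2 \<in> W" using U an by (auto simp: W_def)
  have rmin: "r!0 \<le> r!j" if "j < length r" for j
  proof (cases "length r = 1")
    case True then show ?thesis using that by simp
  next
    case False then have "cc r S'" using cr by simp
    then show ?thesis using cc_min that by blast
  qed
  have r0: "r!0 = a+2"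
  proof -
    obtain j where j: "j < length r" "r!j = a+2" using a2W sr by (metis in_set_conv_nth)
    then have "r!0 \<le> a+2" using rmin by metis
    moreover have "r!0 \<in> W" using sr j(1) nth_mem by (metis gr_zeroI not_less0)
    ultimately show ?thesis unfolding W_def by auto
  qed
  have pe: "p!(2*j) = j+1" if "j \<le> a+1" for j
  proof (cases "j \<le> a")
    case True then show ?thesis by (simp add: p_def nth_append blk_even)
  next
    case False then have "j = a+1" using that by simp
    then show ?thesis using r0 by (simp add: p_def nth_append)
  qed
  have po: "p!(2*j+1) = LL U ! j" if "j \<le> a" for j
    using that blk_odd'[OF fU U(2)] by (simp add: p_def nth_append)
  have pr: "p!(q+x) = r!x" for x using lq by (simp add: p_def nth_append)
  have occE: "occ p (2*j)" if j: "j < a" for j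
  proof -
    have e0: "p!(2*j) = j+1" using pe j by simp
    have e1: "p!(2*j+2) = j+2" using pe[of "Suc j"] j by simp
    have e2: "p!(2*j+4) = j+3" using pe[of "Suc (Suc j)"] j by (simp add: numeral_eq_Suc)
    have o1: "p!(2*j+3) = LL U ! (j+1)" using po[of "Suc j"] j by (simp add: numeral_eq_Suc)
    have o0: "p!(2*j+1) = LL U ! j" using po[of j] j by simp
    have "LL U ! (j+1) < LL U ! j" using LL_dec[OF fU U(2), of j "j+1"] j by simp
    moreover have "a+3 \<le> LL U ! (j+1)" using LL_big[OF U, of "j+1"] j by simp
    ultimately show ?thesis unfolding occ_iff using e0 e1 e2 o1 o0 lp j an by simp
  qed
  have cS: "cc r S'" if "S' \<noteq> {}" using cr that by auto
  have occS: "occ p (k + q)" if "k \<in> S'" for k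
  proof -
    have "occ r k" using cS[of] that unfolding cc_def by blast
    then have "occ (blk a U @ r) (length (blk a U) + k)" using occ_append by blast
    then show ?thesis unfolding p_def lq by (simp add: add.commute)
  qed
  have ES: "i \<in> E a \<longleftrightarrow> even i \<and> i < 2*a" for i
    unfolding E_def by (auto elim!: evenE)
  have shSi: "i \<in> shS a S' \<longleftrightarrow> i \<ge> q \<and> i - q \<in> S'" for i
    unfolding shS_def q_def by (auto simp: image_iff intro: bexI[where x="i - (2*a+2)"])
  have Sdef: "i \<in> S \<longleftrightarrow> (even i \<and> i < 2*a) \<or> (i \<ge> q \<and> i - q \<in> S')" for i
    unfolding S_def using ES shSi by auto
  have S'0: "0 \<in> S'" if "S' \<noteq> {}"
    using cS[OF that] cc_0 lr an by (simp add: q_def)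
  have occ_all: "\<forall>i\<in>S. occ p i"
  proof
    fix i assume "i \<in> S"
    then consider "even i" "i < 2*a" | "i \<ge> q" "i - q \<in> S'" using Sdef by blast
    then show "occ p i"
    proof cases
      case 1 then show ?thesis using occE[of "i div 2"] by auto
    next
      case 2 then show ?thesis using occS[of "i - q"] by simp
    qed
  qed
  have cover: "\<forall>j<n. \<exists>i\<in>S. i \<le> j \<and> j < i + 5"
  proof (intro allI impI)
    fix j assume jn: "j < n"
    show "\<exists>i\<in>S. i \<le> j \<and> j < i + 5"
    proof (cases "j < 2*a")
      case True
      then have "2*(j div 2) \<in> S" using Sdef by auto
      then show ?thesis by (intro bexI[of _ "2*(j div 2)"]) auto
    next
      case False
      have m: "2*a - 2 \<in> S" using Sdef a1 by auto
      show ?thesis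
      proof (cases "j < 2*a+3")
        case True then show ?thesis using m False a1 by (intro bexI[of _ "2*a-2"]) auto
      next
        case False
        then have jq: "j \<ge> q" "j - q < length r" using jn lr by (auto simp: q_def)
        then have "length r \<noteq> 1" using False q_def by auto
        then have ccr: "cc r S'" using cr by auto
        then obtain k where k: "k \<in> S'" "k \<le> j - q" "j - q < k + 5" using jq unfolding cc_def by blast
        then have "k + q \<in> S" using Sdef by simp
        then show ?thesis using k jq by (intro bexI[of _ "k+q"]) auto
      qed
    qed
  qed
  have link: "\<forall>i\<in>S. \<forall>i'\<in>S. i < i' \<and> (\<forall>l\<in>S. \<not> (i < l \<and> l < i')) \<longrightarrow> i' < i + 5"
  proof (intro ballI impI)
    fix i i' assume ii: "i \<in> S" "i' \<in> S" "i < i' \<and> (\<forall>l\<in>S. \<not> (i < l \<and> l < i'))"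
    show "i' < i + 5"
    proof (cases "i' < q")
      case True
      then have "even i'" "i' < 2*a" "even i" "i < 2*a" using ii Sdef q_def by auto
      then obtain u v where uv: "i = 2*u" "i' = 2*v" "u < a" "v < a" by (auto elim!: evenE)
      show ?thesis
      proof (rule ccontr)
        assume "\<not> i' < i+5"
        then have "i + 2 < i'" using uv by simp
        moreover have "i + 2 \<in> S" using Sdef uv \<open>i + 2 < i'\<close> by simp
        ultimately show False using ii by force
      qed
    next
      case False
      then have i'S: "i' - q \<in> S'" using ii Sdef q_def by auto
      then have S'ne: "S' \<noteq> {}" by auto
      show ?thesis
      proof (cases "i < q")
        case True
        then have ie: "even i" "i < 2*a" using ii Sdef q_def by auto
        have m: "2*a - 2 \<in> S" using Sdef a1 by auto
        have "\<not> (i < 2*a - 2)"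
        proof
          assume "i < 2*a - 2"
          moreover have "2*a - 2 < i'" using \<open>\<not> i' < q\<close> q_def by simp
          ultimately show False using ii m by blast
        qed
        then have "i \<ge> 2*a - 2" by simp
        moreover have qS: "q \<in> S" using S'0[OF S'ne] Sdef by simp
        have "\<not> (q < i')"
        proof
          assume "q < i'"
          then show False using ii qS True by blast
        qed
        then have "i' \<le> q" by simp
        ultimately show ?thesis using False q_def by simp
      next
        case False
        then have iS: "i - q \<in> S'" using ii Sdef q_def by auto
        have ccr: "cc r S'" using cS S'ne by blast
        have nb: "\<forall>l\<in>S'. \<not> (i - q < l \<and> l < i' - q)"
        proof (intro ballI notI)
          fix l assume "l \<in> S'" "i - q < l \<and> l < i' - q"
          then have "l + q \<in> S" "i < l + q \<and> l + q < i'" using Sdef False by auto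
          then show False using ii by blast
        qed
        have "i - q < i' - q" using ii False by auto
        then have "i' - q < i - q + 5" using ccr iS i'S nb unfolding cc_def by blast
        then show ?thesis using False by simp
      qed
    qed
  qed
  have dp: "distinct p"
  proof -
    have "set (blk a U) \<inter> set r = {}" using set_blk[OF fU U(2)] sr W_def U by auto
    moreover have "U \<subseteq> {a+3..}" using U by auto
    ultimately show ?thesis using dist_blk[OF fU U(2)] dr by (auto simp: p_def)
  qed
  have setp: "set p = {1..n}" using set_blk[OF fU U(2)] sr W_def U an by (auto simp: p_def)
  show "is_cluster n (blk a U @ r) (E a \<union> shS a S')"
    unfolding is_cluster_iff cc_def using dp setp occ_all cover link lp
    by (simp add: p_def S_def)
  show "blkof (E a \<union> shS a S') = a"
    unfolding blkof_def
  proof (rule Least_equality)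
    show "2*a \<notin> E a \<union> shS a S'" using Sdef[of "2*a"] by (simp add: S_def q_def)
  next
    fix b assume "2*b \<notin> E a \<union> shS a S'"
    then show "a \<le> b" using Sdef[of "2*b"] by (auto simp: S_def)
  qed
qed


lemma inc_chain: fixes e :: "nat \<Rightarrow> nat"
  assumes "\<And>j. j < m \<Longrightarrow> e j < e (Suc j)"
  shows "j < k \<Longrightarrow> k \<le> m \<Longrightarrow> e j < e k"
proof (induction k)
  case 0 then show ?case by simp
next
  case (Suc k)
  then show ?case using assms[of k] by (cases "j = k") auto
qed

lemma inc_chain2: fixes e :: "nat \<Rightarrow> nat"
  assumes "\<And>j. j < m \<Longrightarrow> e j < e (Suc j)"
  shows "k \<le> m \<Longrightarrow> e 0 + k \<le> e k"
proof (induction k)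
  case 0 then show ?case by simp
next
  case (Suc k)
  then show ?case using assms[of k] by simp
qed

lemma inc_chain3: fixes e :: "nat \<Rightarrow> nat"
  assumes "\<And>j. j < m \<Longrightarrow> e j < e (Suc j)"
  shows "d \<le> m \<Longrightarrow> e (m - d) + d \<le> e m"
proof (induction d)
  case 0 then show ?case by simp
next
  case (Suc d)
  then have "e (m - Suc d) < e (m - d)" using assms[of "m - Suc d"] by (simp add: Suc_diff_Suc)
  then show ?case using Suc by simp
qed

lemma struct:
  assumes n5: "n \<ge> 5" and cl: "is_cluster n p S"
  shows "1 \<le> blkof S \<and> 2 * blkof S + 3 \<le> n \<and> (\<exists>U r S'. U \<subseteq> {blkof S+3..n} \<and> card U = blkof S+1 \<and>
          (r,S') \<in> OKW ({blkof S+2..n} - U) \<and> p = blk (blkof S) U @ r \<and> S = E (blkof S) \<union> shS (blkof S) S')"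
proof -
  define a where "a = blkof S"
  have dp: "distinct p" and sp: "set p = {1..n}" and ccp: "cc p S" using cl unfolding is_cluster_iff by auto
  have lp: "length p = n" using dp sp by (metis card_atLeastAtMost diff_Suc_1 distinct_card)
  have z: "0 \<in> S" using cc_0 ccp lp n5 by simp
  have Sb: "S \<subseteq> {..<n}" using cc_S_bound[OF ccp] lp by simp
  have ex: "2*n \<notin> S" using Sb by auto
  have aL: "2*a \<notin> S" unfolding a_def blkof_def by (rule LeastI[of _ n]) (rule ex)
  have below: "b < a \<Longrightarrow> 2*b \<in> S" for b unfolding a_def blkof_def using not_less_Least by blast
  have a1: "1 \<le> a" using aL z by (cases a) auto
  have occS: "i \<in> S \<Longrightarrow> occ p i" for i using ccp unfolding cc_def by blast
  have occE: "j < a \<Longrightarrow> occ p (2*j)" for j using below occS by blast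
  define q where "q = 2*a+2"
  have lowS: "even i \<and> i < 2*a" if "i \<in> S" "i < q" for i
  proof (cases "even i")
    case True
    then obtain j where j: "i = 2*j" by (auto elim!: evenE)
    then have "j \<le> a" using that q_def by simp
    moreover have "j \<noteq> a" using aL j that by auto
    ultimately show ?thesis using j True by simp
  next
    case False
    then obtain j where j: "i = 2*j+1" by (auto elim!: oddE)
    then have "j \<le> a" using that q_def by simp
    show ?thesis
    proof (cases "j < a")
      case True
      then show ?thesis using occ_gap1[OF occE[OF True]] occS that j by simp
    next
      case False
      then have "j = a" using \<open>j \<le> a\<close> by simp
      have "occ p (2*(a-1))" using occE a1 by simp
      moreover have "2*(a-1) + 3 = i" using j \<open>j = a\<close> a1 by simp
      ultimately show ?thesis using occ_gap3[of p "2*(a-1)"] occS[OF that(1)] by simp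
    qed
  qed
  have o2a: "occ p (2*(a-1))" using occE a1 by simp
  then have an: "2*a+3 \<le> n" using occ_len lp a1 by fastforce
  define S'' where "S'' = {i\<in>S. q \<le> i}"
  define S' where "S' = (\<lambda>i. i - q) ` S''"
  have S'iff: "k \<in> S' \<longleftrightarrow> k + q \<in> S" for k
    unfolding S'_def S''_def by (auto simp: image_iff intro: bexI[where x="k+q"])
  have ES: "i \<in> E a \<longleftrightarrow> even i \<and> i < 2*a" for i
    unfolding E_def by (auto elim!: evenE)
  have shSi: "i \<in> shS a S' \<longleftrightarrow> i \<ge> q \<and> i - q \<in> S'" for i
    unfolding shS_def q_def by (auto simp: image_iff intro: bexI[where x="i - (2*a+2)"])
  have Seq: "S = E a \<union> shS a S'"
  proof (rule set_eqI)
    fix x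
    show "x \<in> S \<longleftrightarrow> x \<in> E a \<union> shS a S'"
    proof
      assume "x \<in> S"
      then show "x \<in> E a \<union> shS a S'" using lowS ES shSi S'iff by (cases "x < q") auto
    next
      assume "x \<in> E a \<union> shS a S'"
      then show "x \<in> S" using ES shSi S'iff below by (auto elim!: evenE)
    qed
  qed
  define r where "r = drop q p"
  have lr: "length r = n - q" using lp by (simp add: r_def)
  have pr: "p!(q+x) = r!x" if "x < length r" for x using that lr an by (simp add: r_def q_def)
  have m: "2*a - 2 \<in> S"
  proof -
    have "2*(a-1) \<in> S" using below a1 by simp
    moreover have "2*(a-1) = 2*a-2" by simp
    ultimately show ?thesis by simp
  qed
  have rS: "(length r = 1 \<and> S' = {}) \<or> cc r S'"
  proof (cases "S' = {}")
    case True
    have "n - 1 < length p" using lp n5 by simp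
    then obtain i where i: "i \<in> S" "i \<le> n - 1" "n - 1 < i + 5" using ccp unfolding cc_def by blast
    have "i < q"
    proof (rule ccontr)
      assume "\<not> i < q"
      then have "(i - q) + q \<in> S" using i by simp
      then have "i - q \<in> S'" using S'iff by blast
      then show False using True by simp
    qed
    then have "i \<le> 2*a - 2" using lowS[OF i(1)] by (auto elim!: evenE)
    moreover have "i + 5 \<le> n" using occS[OF i(1)] occ_len lp by fastforce
    ultimately have "n = 2*a+3" using i an a1 n5 by arith
    then show ?thesis using lr True q_def by simp
  next
    case False
    have qS: "q \<in> S"
    proof -
      define mS where "mS = Min S''"
      have fS: "finite S''" using Sb unfolding S''_def by (simp add: finite_subset)
      have neS: "S'' \<noteq> {}" using False S'_def by simp
      have mSin: "mS \<in> S''" using Min_in fS neS mS_def by blast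
      have nb: "\<forall>l\<in>S. \<not> (2*a - 2 < l \<and> l < mS)"
      proof (intro ballI notI)
        fix l assume l: "l \<in> S" "2*a - 2 < l \<and> l < mS"
        show False
        proof (cases "l < q")
          case True then show False using lowS[OF l(1) True] l a1 by (auto elim!: evenE)
        next
          case False then have "l \<in> S''" using l S''_def by simp
          then have "mS \<le> l" using Min_le fS mS_def by blast
          then show False using l by simp
        qed
      qed
      have mq: "mS \<ge> q" using mSin S''_def by simp
      then have "2*a - 2 < mS" using q_def by arith
      moreover have "mS \<in> S" using mSin S''_def by simp
      ultimately have "mS < 2*a - 2 + 5" using ccp m nb unfolding cc_def by blast
      then have "mS = q" using mq a1 q_def by arith
      then show ?thesis using mSin S''_def by simp
    qed
    have ccr: "cc r S'"
      unfolding cc_def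
    proof (intro conjI)
      show "\<forall>i\<in>S'. occ r i"
      proof
        fix k assume "k \<in> S'"
        then have "occ p (k+q)" using S'iff occS by blast
        then have "occ (take q p @ r) (length (take q p) + k)" using lp an q_def by (simp add: r_def add.commute)
        then show "occ r k" using occ_append by blast
      qed
    next
      show "\<forall>j<length r. \<exists>i\<in>S'. i \<le> j \<and> j < i + 5"
      proof (intro allI impI)
        fix j assume j: "j < length r"
        then obtain i where i: "i \<in> S" "i \<le> q + j" "q + j < i + 5" using ccp lr lp unfolding cc_def
          by (metis add.commute less_diff_conv)
        show "\<exists>i\<in>S'. i \<le> j \<and> j < i + 5"
        proof (cases "i < q")
          case True
          then have "i \<le> 2*a - 2" using lowS[OF i(1)] by (auto elim!: evenE)
          then have "j = 0" using i q_def a1 by simp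
          moreover have "0 \<in> S'" using S'iff qS by simp
          ultimately show ?thesis by auto
        next
          case False
          then have "i - q \<in> S'" using S'iff i by simp
          then show ?thesis using i False by (intro bexI[of _ "i - q"]) auto
        qed
      qed
    next
      show "\<forall>i\<in>S'. \<forall>i'\<in>S'. i < i' \<and> (\<forall>l\<in>S'. \<not> (i < l \<and> l < i')) \<longrightarrow> i' < i + 5"
      proof (intro ballI impI)
        fix k k' assume kk: "k \<in> S'" "k' \<in> S'" "k < k' \<and> (\<forall>l\<in>S'. \<not> (k < l \<and> l < k'))"
        have "\<forall>l\<in>S. \<not> (k + q < l \<and> l < k' + q)"
        proof (intro ballI notI)
          fix l assume "l \<in> S" "k + q < l \<and> l < k' + q"
          then have "l - q \<in> S'" "k < l - q \<and> l - q < k'" using S'iff by auto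
          then show False using kk by blast
        qed
        moreover have "k + q \<in> S" "k' + q \<in> S" using kk S'iff by auto
        ultimately have "k' + q < k + q + 5" using ccp kk unfolding cc_def by auto
        then show "k' < k + 5" by simp
      qed
    qed
    then show ?thesis by simp
  qed
  have rmin: "r!0 \<le> r!j" if "j < length r" for j
  proof (cases "length r = 1")
    case True then show ?thesis using that by simp
  next
    case False then have "cc r S'" using rS by simp
    then show ?thesis using cc_min that by blast
  qed
  have ev: "p!(2*j) < p!(2*Suc j)" if "j < Suc a" for j
  proof (cases "j < a")
    case True
    then have "occ p (2*j)" using occE by blast
    then have "p!(2*j) < p!(2*j+2)" unfolding occ_iff by blast
    moreover have e: "2*j+2 = 2*Suc j" by simp
    ultimately show ?thesis by (simp only: e)
  next
    case False
    then have "j = a" using that by simp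
    have e: "2*(a-1)+2 = 2*j" "2*(a-1)+4 = 2*Suc j" using a1 \<open>j = a\<close> by auto
    have "p!(2*(a-1)+2) < p!(2*(a-1)+4)" using o2a unfolding occ_iff by blast
    then show ?thesis by (simp only: e)
  qed
  have od: "p!(2*Suc j+1) < p!(2*j+1)" if "j < a" for j
  proof -
    have "occ p (2*j)" using occE that by blast
    then have "p!(2*j+3) < p!(2*j+1)" unfolding occ_iff by blast
    moreover have e: "2*j+3 = 2*Suc j+1" by simp
    ultimately show ?thesis by (simp only: e)
  qed
  have top: "p!q < p!(2*a+1)"
  proof -
    have e: "2*(a-1)+4 = q" "2*(a-1)+3 = 2*a+1" using a1 q_def by auto
    have "p!(2*(a-1)+4) < p!(2*(a-1)+3)" using o2a unfolding occ_iff by blast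
    then show ?thesis by (simp only: e)
  qed
  have even_inc: "p!(2*j) < p!(2*k)" if "j < k" "k \<le> Suc a" for j k
    using inc_chain[of "Suc a" "\<lambda>j. p!(2*j)"] ev that by blast
  have odd_dec: "p!(2*k+1) < p!(2*j+1)" if "j < k" "k \<le> a" for j k
  proof -
    have bnd: "j \<le> a \<Longrightarrow> p!(2*j+1) \<le> n" for j
      using sp lp an nth_mem[of "2*j+1" p] by auto
    have "\<And>i. i < a \<Longrightarrow> n - p!(2*i+1) < n - p!(2*Suc i+1)"
    proof -
      fix i assume "i < a"
      then have "p!(2*Suc i+1) < p!(2*i+1)" "p!(2*i+1) \<le> n" using od bnd by auto
      then show "n - p!(2*i+1) < n - p!(2*Suc i+1)" by arith
    qed
    then have "n - p!(2*j+1) < n - p!(2*k+1)" using inc_chain[of a "\<lambda>j. n - p!(2*j+1)" j k] that by blast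
    then show ?thesis using bnd[of k] that by linarith
  qed
  have qv: "q = 2 * Suc a" using q_def by simp
  have odd_big: "p!q < p!(2*j+1)" if "j \<le> a" for j
    using odd_dec[of j a] top that by (cases "j = a") auto
  have even_small: "p!(2*j) < p!q" if "j \<le> a" for j
    using even_inc[of j "Suc a"] that qv by simp
  have high: "p!q \<le> p!x" if "q \<le> x" "x < n" for x
    using rmin[of "x - q"] pr[of "x - q"] pr[of 0] that lr by simp
  have lowset: "{x. x < n \<and> p!x < p!q} = (\<lambda>j. 2*j) ` {..a}"
  proof (rule set_eqI)
    fix x
    show "x \<in> {x. x < n \<and> p!x < p!q} \<longleftrightarrow> x \<in> (\<lambda>j. 2*j) ` {..a}"
    proof
      assume x: "x \<in> {x. x < n \<and> p!x < p!q}"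
      then have xn: "x < n" "p!x < p!q" by blast+
      have xq: "x < q"
      proof (rule ccontr)
        assume "\<not> x < q"
        then have "p!q \<le> p!x" using high xn(1) by simp
        then show False using xn(2) by simp
      qed
      have "even x"
      proof (rule ccontr)
        assume "odd x"
        then obtain j where j: "x = 2*j+1" by (auto elim!: oddE)
        then have "j \<le> a" using xq q_def by simp
        then have "p!q < p!x" using odd_big j by blast
        then show False using xn(2) by simp
      qed
      then obtain j where j: "x = 2*j" by (auto elim!: evenE)
      then have "j \<le> a" using xq q_def by simp
      then show "x \<in> (\<lambda>j. 2*j) ` {..a}" using j by blast
    next
      assume "x \<in> (\<lambda>j. 2*j) ` {..a}"
      then obtain j where j: "j \<le> a" "x = 2*j" by blast
      then have "x < n" using an by simp
      moreover have "p!x < p!q" using even_small j by blast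
      ultimately show "x \<in> {x. x < n \<and> p!x < p!q}" by blast
    qed
  qed
  have cl: "card {x. x < n \<and> p!x < p!q} = a+1"
  proof -
    have "inj_on (\<lambda>j::nat. 2*j) {..a}" by (simp add: inj_on_def)
    then have "card ((\<lambda>j. 2*j) ` {..a}) = card {..a}" by (rule card_image)
    then show ?thesis unfolding lowset by simp
  qed
  have pq: "p!q = a+2"
  proof -
    define X where "X = {x. x < n \<and> p!x < p!q}"
    define V where "V = {v\<in>{1..n}. v < p!q}"
    have VX: "V = (\<lambda>x. p!x) ` X"
    proof (rule set_eqI, rule iffI)
      fix v assume "v \<in> V"
      then have "v \<in> set p" "v < p!q" using sp unfolding V_def by blast+
      then obtain x where "x < length p" "p!x = v" by (metis in_set_conv_nth)
      then show "v \<in> (\<lambda>x. p!x) ` X" using \<open>v < p!q\<close> lp unfolding X_def by blast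
    next
      fix v assume "v \<in> (\<lambda>x. p!x) ` X"
      then obtain x where x: "x < n" "p!x < p!q" "v = p!x" unfolding X_def by blast
      then have "v \<in> set p" using lp by simp
      then show "v \<in> V" using sp x unfolding V_def by blast
    qed
    have "inj_on (\<lambda>x. p!x) X"
      unfolding X_def inj_on_def using dp lp nth_eq_iff_index_eq by blast
    then have "card V = a+1" using cl VX card_image X_def by metis
    moreover have "p!q \<in> set p" using lp an q_def by simp
    then have "p!q \<in> {1..n}" using sp by blast
    moreover have "V = {1..<p!q}" using calculation(2) unfolding V_def by auto
    ultimately show ?thesis by simp
  qed
  have evv: "p!(2*j) = j+1" if "j \<le> Suc a" for j
  proof -
    have "p!0 \<in> set p" using lp an by simp
    then have e0: "p!(2*0) \<ge> 1" using sp by simp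
    have c2: "p!(2*0) + j \<le> p!(2*j)"
      by (rule inc_chain2[where m="Suc a" and e="\<lambda>j. p!(2*j)" and k=j, OF ev]) (use that in simp_all)
    have c3: "p!(2*(Suc a - (Suc a - j))) + (Suc a - j) \<le> p!(2*Suc a)"
      by (rule inc_chain3[where m="Suc a" and e="\<lambda>j. p!(2*j)" and d="Suc a - j", OF ev]) (use that in simp_all)
    have "Suc a - (Suc a - j) = j" using that by simp
    then have c3': "p!(2*j) + (Suc a - j) \<le> a + 2" using c3 pq qv by simp
    show ?thesis using c2 c3' e0 that by simp
  qed
  define U where "U = (\<lambda>j. p!(2*j+1)) ` {..a}"
  have injU: "inj_on (\<lambda>j. p!(2*j+1)) {..a}"
  proof (rule inj_onI)
    fix x y assume xy: "x \<in> {..a}" "y \<in> {..a}" "p!(2*x+1) = p!(2*y+1)"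
    then have "2*x+1 < length p" "2*y+1 < length p" using lp an by auto
    then have "2*x+1 = 2*y+1" using nth_eq_iff_index_eq[OF dp] xy(3) by blast
    then show "x = y" by simp
  qed
  have cU: "card U = a+1" unfolding U_def using injU by (simp add: card_image)
  have fU: "finite U" unfolding U_def by simp
  have subU: "U \<subseteq> {a+3..n}"
  proof
    fix v assume "v \<in> U"
    then obtain j where j: "j \<le> a" "v = p!(2*j+1)" unfolding U_def by auto
    then have "v > a+2" using odd_big pq by simp
    moreover have "v \<in> {1..n}" using j sp lp an nth_mem[of "2*j+1" p] by auto
    ultimately show "v \<in> {a+3..n}" by simp
  qed
  define M where "M = map (\<lambda>j. p!(2*j+1)) [0..<Suc a]"
  have LLM: "LL U = M"
  proof -
    have Mn: "i < Suc a \<Longrightarrow> M!i = p!(2*i+1)" for i unfolding M_def by (simp del: upt_Suc)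
    have lM: "length M = Suc a" unfolding M_def by simp
    have "sorted_wrt (\<lambda>x y. y < x) M" unfolding sorted_wrt_iff_nth_less
    proof (intro allI impI)
      fix i j assume "i < j" "j < length M"
      then have ij: "i < j" "j \<le> a" using lM by auto
      then have "M!j = p!(2*j+1)" "M!i = p!(2*i+1)" using Mn by auto
      then show "M!j < M!i" using odd_dec[OF ij] by simp
    qed
    then have sw: "sorted_wrt (<) (rev M)" unfolding sorted_wrt_rev .
    then have "sorted (rev M) \<and> distinct (rev M)" using strict_sorted_iff by blast
    then have "sorted (rev M)" "distinct (rev M)" by auto
    moreover have "set (rev M) = U" unfolding M_def U_def
      by (simp del: upt_Suc add: atLeast0LessThan lessThan_Suc_atMost)
    ultimately have "sorted_list_of_set U = rev M" using sorted_list_of_set_unique[OF fU, of "rev M"] sw lM cU by simp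
    then show ?thesis by (simp add: LL_def)
  qed
  have tk: "take q p = blk a U"
  proof (rule nth_equalityI)
    show "length (take q p) = length (blk a U)" using lp an q_def by simp
  next
    fix i assume i: "i < length (take q p)"
    then have iq: "i < 2*a+2" using q_def by simp
    show "take q p ! i = blk a U ! i"
    proof (cases "even i")
      case True
      then have "p!i = i div 2 + 1" using evv[of "i div 2"] iq by (auto elim!: evenE)
      then show ?thesis using blk_nth[OF fU cU iq] True i by simp
    next
      case False
      then obtain j where j: "i = 2*j+1" by (auto elim!: oddE)
      then have "j < Suc a" "i div 2 = j" using iq by auto
      then have "M ! (i div 2) = p!i" unfolding M_def using j by (simp del: upt_Suc)
      then have "LL U ! (i div 2) = p!i" using LLM by simp
      then show ?thesis using blk_nth[OF fU cU iq] False i by simp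
    qed
  qed
  have pe: "p = blk a U @ r" unfolding r_def tk[symmetric] by simp
  have rOK: "(r,S') \<in> OKW ({a+2..n} - U)"
  proof -
    have "distinct r" using dp by (simp add: r_def)
    moreover have "set r = {a+2..n} - U"
    proof -
      have "distinct (blk a U @ r)" using dp pe by simp
      then have "set (blk a U) \<inter> set r = {}" by simp
      moreover have "set (blk a U) \<union> set r = {1..n}" using sp pe by (metis set_append)
      ultimately have "set r = {1..n} - ({1..a+1} \<union> U)" using set_blk[OF fU cU] by blast
      moreover have "{1..n} - ({1..a+1} \<union> U) = {a+2..n} - U" by auto
      ultimately show ?thesis by simp
    qed
    ultimately show ?thesis using rS unfolding OKW_def by simp
  qed
  have "1 \<le> a \<and> 2 * a + 3 \<le> n \<and> (\<exists>U r S'. U \<subseteq> {a+3..n} \<and> card U = a+1 \<and>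
          (r,S') \<in> OKW ({a+2..n} - U) \<and> p = blk a U @ r \<and> S = E a \<union> shS a S')"
    using a1 an subU cU rOK pe Seq by blast
  then show ?thesis unfolding a_def .
qed




definition Phi :: "nat \<Rightarrow> nat set \<times> nat list \<times> nat set \<Rightarrow> nat list \<times> nat set" where
  "Phi a x = (case x of (U, r, S') \<Rightarrow> (blk a U @ r, E a \<union> shS a S'))"

definition Os :: "nat \<Rightarrow> nat \<Rightarrow> nat set set" where
  "Os n a = {U. U \<subseteq> {a+3..n} \<and> card U = a+1}"

lemma mem_ES: "x \<in> S' \<longleftrightarrow> x + (2*a+2) \<in> E a \<union> shS a S'"
  unfolding E_def shS_def by auto

lemma set_blk_minus: assumes "U \<subseteq> {a+3..n}" "card U = a+1" shows "U = set (blk a U) - {1..a+1}"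
proof -
  have "finite U" using assms(1) finite_subset by blast
  then show ?thesis using set_blk[of U a] assms by auto
qed

lemma Phi_inj: "inj_on (Phi a) (Sigma (Os n a) (\<lambda>U. OKW ({a+2..n} - U)))"
proof (rule inj_onI)
  fix x y assume x: "x \<in> Sigma (Os n a) (\<lambda>U. OKW ({a+2..n} - U))"
    and y: "y \<in> Sigma (Os n a) (\<lambda>U. OKW ({a+2..n} - U))" and e: "Phi a x = Phi a y"
  obtain U1 r1 S1 where x': "x = (U1,r1,S1)" "U1 \<in> Os n a" using x by (cases x) auto
  obtain U2 r2 S2 where y': "y = (U2,r2,S2)" "U2 \<in> Os n a" using y by (cases y) auto
  have e1: "blk a U1 @ r1 = blk a U2 @ r2" and e2: "E a \<union> shS a S1 = E a \<union> shS a S2"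
    using e x' y' by (auto simp: Phi_def)
  then have "blk a U1 = blk a U2" "r1 = r2" by (auto simp: append_eq_append_conv)
  moreover have "U1 = U2" using set_blk_minus[of U1 a n] set_blk_minus[of U2 a n] x'(2) y'(2)
    calculation(1) unfolding Os_def by auto
  moreover have "S1 = S2" using mem_ES[of _ S1 a] mem_ES[of _ S2 a] e2 by blast
  ultimately show "x = y" using x' y' by simp
qed

lemma Phi_image: assumes "n \<ge> 5" "1 \<le> a" "2*a+3 \<le> n"
  shows "Phi a ` Sigma (Os n a) (\<lambda>U. OKW ({a+2..n} - U)) = {x \<in> CL n. blkof (snd x) = a}"
proof
  show "Phi a ` Sigma (Os n a) (\<lambda>U. OKW ({a+2..n} - U)) \<subseteq> {x \<in> CL n. blkof (snd x) = a}"
  proof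
    fix y assume "y \<in> Phi a ` Sigma (Os n a) (\<lambda>U. OKW ({a+2..n} - U))"
    then obtain U r S' where u: "U \<in> Os n a" "(r,S') \<in> OKW ({a+2..n} - U)" "y = Phi a (U,r,S')" by auto
    then have "U \<subseteq> {a+3..n}" "card U = a+1" unfolding Os_def by auto
    then show "y \<in> {x \<in> CL n. blkof (snd x) = a}"
      using Phi_fwd[OF assms(2,3) _ _ u(2)] u(3) unfolding CL_def Phi_def by simp
  qed
next
  show "{x \<in> CL n. blkof (snd x) = a} \<subseteq> Phi a ` Sigma (Os n a) (\<lambda>U. OKW ({a+2..n} - U))"
  proof
    fix x assume x: "x \<in> {x \<in> CL n. blkof (snd x) = a}"
    then obtain p S where pS: "x = (p,S)" "is_cluster n p S" "blkof S = a" unfolding CL_def by auto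
    then obtain U r S' where "U \<subseteq> {a+3..n}" "card U = a+1" "(r,S') \<in> OKW ({a+2..n} - U)"
      "p = blk a U @ r" "S = E a \<union> shS a S'" using struct[OF assms(1) pS(2)] by auto
    then show "x \<in> Phi a ` Sigma (Os n a) (\<lambda>U. OKW ({a+2..n} - U))"
      using pS(1) unfolding Phi_def Os_def by (intro image_eqI[of _ _ "(U,r,S')"]) auto
  qed
qed

lemma card_Phi: assumes "(r,S') \<in> OKW W" shows "card (E a \<union> shS a S') = a + card S'"
proof -
  have fS: "finite S'" using assms cc_S_bound unfolding OKW_def by (auto intro: finite_subset)
  have "E a \<inter> shS a S' = {}" unfolding E_def shS_def by auto
  moreover have "card (E a) = a" unfolding E_def by (subst card_image) (auto simp: inj_on_def)
  moreover have "card (shS a S') = card S'" unfolding shS_def by (subst card_image) (auto simp: inj_on_def)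
  moreover have "finite (E a)" unfolding E_def by simp
  moreover have "finite (shS a S')" unfolding shS_def using fS by simp
  ultimately show ?thesis by (simp add: card_Un_disjoint)
qed

lemma sg_block: assumes "n \<ge> 5" "1 \<le> a" "2*a+3 \<le> n"
  shows "sg {x \<in> CL n. blkof (snd x) = a} = (-1)^a * int (n-a-2 choose (a+1)) * t (n-2*a-2)"
proof -
  let ?D = "Sigma (Os n a) (\<lambda>U. OKW ({a+2..n} - U))"
  have bij: "bij_betw (Phi a) ?D {x \<in> CL n. blkof (snd x) = a}"
    unfolding bij_betw_def using Phi_inj Phi_image[OF assms] by blast
  have fO: "finite (Os n a)" unfolding Os_def by (rule finite_subset[of _ "Pow {a+3..n}"]) auto
  have "sg {x \<in> CL n. blkof (snd x) = a} = (\<Sum>y\<in>?D. (-1::int)^card (snd (Phi a y)))"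
    unfolding sg_def by (rule sum.reindex_bij_betw[symmetric]) (rule bij)
  also have "\<dots> = (\<Sum>(U,z)\<in>?D. (-1::int)^card (snd (Phi a (U,z))))"
    by (rule sum.cong[OF refl]) (simp add: split_beta)
  also have "\<dots> = (\<Sum>U\<in>Os n a. \<Sum>z\<in>OKW ({a+2..n} - U). (-1::int)^card (snd (Phi a (U,z))))"
    by (rule sum.Sigma[symmetric]) (use fO OKW_finite in auto)
  also have "\<dots> = (\<Sum>U\<in>Os n a. (-1)^a * sg (OKW ({a+2..n} - U)))"
  proof (rule sum.cong[OF refl])
    fix U assume "U \<in> Os n a"
    have "(\<Sum>z\<in>OKW ({a+2..n} - U). (-1::int)^card (snd (Phi a (U,z))))
        = (\<Sum>z\<in>OKW ({a+2..n} - U). (-1)^a * (-1::int)^card (snd z))"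
    proof (rule sum.cong[OF refl])
      fix z assume z: "z \<in> OKW ({a+2..n} - U)"
      obtain r S' where "z = (r,S')" by (cases z)
      then show "(-1::int)^card (snd (Phi a (U,z))) = (-1)^a * (-1)^card (snd z)"
        using card_Phi[of r S' _ a] z by (simp add: Phi_def power_add)
    qed
    then show "(\<Sum>z\<in>OKW ({a+2..n} - U). (-1::int)^card (snd (Phi a (U,z)))) = (-1)^a * sg (OKW ({a+2..n} - U))"
      by (simp add: sg_def sum_distrib_left)
  qed
  also have "\<dots> = (\<Sum>U\<in>Os n a. (-1)^a * t (n-2*a-2))"
  proof (rule sum.cong[OF refl])
    fix U assume U: "U \<in> Os n a"
    then have UW: "U \<subseteq> {a+2..n}" "card U = a+1" "finite U" unfolding Os_def by (auto intro: finite_subset)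
    have "card ({a+2..n} - U) = n-2*a-2" using card_Diff_subset[OF UW(3,1)] UW(2) assms by simp
    then show "(-1)^a * sg (OKW ({a+2..n} - U)) = (-1)^a * t (n-2*a-2)"
      using sg_OKW[of "{a+2..n} - U" "n-2*a-2"] assms by simp
  qed
  also have "\<dots> = int (card (Os n a)) * ((-1)^a * t (n-2*a-2))" by simp
  also have "card (Os n a) = n-a-2 choose (a+1)"
    unfolding Os_def using n_subsets[of "{a+3..n}" "a+1"] by simp
  finally show ?thesis by simp
qed

lemma t_rec: assumes "n \<ge> 5"
  shows "t n = (\<Sum>a\<in>{a. 1 \<le> a \<and> 2*a+3 \<le> n}. (-1)^a * int (n-a-2 choose (a+1)) * t (n-2*a-2))"
proof -
  let ?A = "{a. 1 \<le> a \<and> 2*a+3 \<le> n}"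
  have fA: "finite ?A" by (rule finite_subset[of _ "{..n}"]) auto
  have gA: "(\<lambda>x. blkof (snd x)) ` CL n \<subseteq> ?A"
  proof
    fix y assume "y \<in> (\<lambda>x. blkof (snd x)) ` CL n"
    then obtain p S where "is_cluster n p S" "y = blkof S" unfolding CL_def by auto
    then show "y \<in> ?A" using struct[OF assms] by auto
  qed
  have "t n = sg (CL n)" using t_CL assms by simp
  also have "\<dots> = (\<Sum>a\<in>?A. sg {x. x \<in> CL n \<and> blkof (snd x) = a})"
    unfolding sg_def by (rule sum.group[symmetric]) (use CL_finite fA gA in auto)
  also have "\<dots> = (\<Sum>a\<in>?A. (-1)^a * int (n-a-2 choose (a+1)) * t (n-2*a-2))"
    by (rule sum.cong[OF refl]) (use sg_block assms in auto)
  finally show ?thesis .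
qed




definition uu :: "real fps" where "uu = inverse (1 + fps_X^2)"

lemma uu_mul: "uu * (1 + fps_X^2) = 1"
  unfolding uu_def by (rule inverse_mult_eq_1) simp

lemma uu_pow_rec: "uu^(Suc i) * (1 + fps_X^2) = uu^i"
  by (simp only: power_Suc2 mult.assoc uu_mul mult_1_right)

lemma uu_pow_nth_rec: "fps_nth (uu^(Suc i)) n + (if n < 2 then 0 else fps_nth (uu^(Suc i)) (n-2)) = fps_nth (uu^i) n"
proof -
  have "fps_nth (uu^(Suc i) * (1 + fps_X^2)) n = fps_nth (uu^i) n" by (simp only: uu_pow_rec)
  moreover have "uu^(Suc i) * (1 + fps_X^2) = uu^(Suc i) + fps_X^2 * uu^(Suc i)"
    by (simp only: distrib_left mult_1_right mult_1_left mult.commute)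
  ultimately show ?thesis by (simp add: fps_X_power_mult_nth del: power_Suc)
qed

lemma uu_pow_odd: "fps_nth (uu^i) (2*k+1) = 0"
proof (induction i arbitrary: k)
  case 0 then show ?case by simp
next
  case (Suc i)
  show ?case
  proof (induction k)
    case 0 then show ?case using uu_pow_nth_rec[of i 1] Suc.IH[of 0] by (simp del: power_Suc)
  next
    case (Suc k)
    have "fps_nth (uu^(Suc i)) (2*Suc k+1) + fps_nth (uu^(Suc i)) (2*k+1) = fps_nth (uu^i) (2*Suc k+1)"
      using uu_pow_nth_rec[of i "2*Suc k+1"] by (simp del: power_Suc)
    then show ?case using Suc.IH \<open>\<And>k. fps_nth (uu^i) (2*k+1) = 0\<close>[of "Suc k"] by (simp del: power_Suc)
  qed
qed

lemma uu_pow_even: "fps_nth (uu^i) (2*k) = (-1)^k * real (i + k - 1 choose k)"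
proof (induction i arbitrary: k)
  case 0 then show ?case by (cases k) auto
next
  case (Suc i)
  show ?case
  proof (induction k)
    case 0 then show ?case using uu_pow_nth_rec[of i 0] Suc.IH[of 0] by (simp del: power_Suc)
  next
    case (Suc k)
    have "fps_nth (uu^(Suc i)) (2*Suc k) + fps_nth (uu^(Suc i)) (2*k) = fps_nth (uu^i) (2*Suc k)"
      using uu_pow_nth_rec[of i "2*Suc k"] by (simp del: power_Suc)
    then have A: "fps_nth (uu^(Suc i)) (2*Suc k) = (-1)^Suc k * real (i + Suc k - 1 choose Suc k) - (-1)^k * real (i + k choose k)"
      using Suc.IH \<open>\<And>k. fps_nth (uu^i) (2*k) = (-1)^k * real (i + k - 1 choose k)\<close>[of "Suc k"] by (simp del: power_Suc)
    have e: "i + Suc k - 1 = i + k" by simp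
    have C: "real (Suc i + Suc k - 1 choose Suc k) = real (i + k choose k) + real (i + k choose Suc k)"
    proof -
      have "Suc i + Suc k - 1 = Suc (i+k)" by simp
      then show ?thesis by (simp only: binomial_Suc_Suc of_nat_add)
    qed
    have B: "(-1)^Suc k * real (i + k choose Suc k) - (-1)^k * real (i + k choose k)
        = (-1::real)^Suc k * real (Suc i + Suc k - 1 choose Suc k)"
      unfolding C by (simp add: algebra_simps)
    show ?case using A B unfolding e by simp
  qed
qed

definition yy :: "real fps" where "yy = fps_X / (1 + fps_X^2)"

lemma yy_eq: "yy = fps_X * uu"
  unfolding yy_def uu_def by (rule fps_divide_unit) simp

lemma yy_pow_nth: "fps_nth (yy^i) n = (if n < i then 0 else fps_nth (uu^i) (n-i))"
  unfolding yy_eq power_mult_distrib by (simp add: fps_X_power_mult_nth)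




lemma T_nth: "fps_nth T k = (if k = 0 then 1 else real_of_int (t k))"
  by (simp add: T_def)

lemma t_rec2: assumes "n \<ge> 2"
  shows "t n = - (\<Sum>b\<in>{b. 2 \<le> b \<and> 2*b+1 \<le> n}. (-1)^b * int (n-b-1 choose b) * t (n-2*b))"
proof (cases "n \<ge> 5")
  case True
  let ?A = "{a. 1 \<le> a \<and> 2*a+3 \<le> n}"
  let ?g = "\<lambda>b. (-1)^b * int (n-b-1 choose b) * t (n-2*b)"
  have im: "Suc ` ?A = {b. 2 \<le> b \<and> 2*b+1 \<le> n}"
  proof (rule set_eqI, rule iffI)
    fix b assume "b \<in> Suc ` ?A" then show "b \<in> {b. 2 \<le> b \<and> 2*b+1 \<le> n}" by auto
  next
    fix b assume b: "b \<in> {b. 2 \<le> b \<and> 2*b+1 \<le> n}"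
    then have "b - 1 \<in> ?A" "b = Suc (b - 1)" by auto
    then show "b \<in> Suc ` ?A" by blast
  qed
  have "(\<Sum>b\<in>{b. 2 \<le> b \<and> 2*b+1 \<le> n}. ?g b) = (\<Sum>a\<in>?A. ?g (Suc a))"
    unfolding im[symmetric] by (simp add: sum.reindex inj_on_def)
  also have "\<dots> = (\<Sum>a\<in>?A. - ((-1)^a * int (n-a-2 choose (a+1)) * t (n-2*a-2)))"
  proof (rule sum.cong[OF refl])
    fix a assume "a \<in> ?A"
    have "n - Suc a - 1 = n-a-2" "n - 2 * Suc a = n-2*a-2" by auto
    then show "?g (Suc a) = - ((-1)^a * int (n-a-2 choose (a+1)) * t (n-2*a-2))" by simp
  qed
  also have "\<dots> = - t n" using t_rec[OF True] by (simp add: sum_negf)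
  finally show ?thesis by simp
next
  case False
  then have E0: "{b. 2 \<le> b \<and> 2*b+1 \<le> n} = {}" by auto
  have "n = 2 \<or> n = 3 \<or> n = 4" using False assms by auto
  then have "t n = 0" using t_small by auto
  then show ?thesis unfolding E0 by simp
qed

lemma compose_nth: assumes "n \<ge> 1"
  shows "fps_nth (fps_compose T yy) n = (\<Sum>b\<in>{b. 2*b+1 \<le> n}. (-1)^b * real (n-b-1 choose b) * real_of_int (t (n-2*b)))"
proof -
  let ?B = "{b. 2*b+1 \<le> n}"
  let ?f = "\<lambda>i. fps_nth T i * fps_nth (yy^i) n"
  let ?h = "\<lambda>b::nat. n - 2*b"
  have fB: "finite ?B" by (rule finite_subset[of _ "{..n}"]) auto
  have sub: "?h ` ?B \<subseteq> {0..n}" by auto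
  have zero: "?f i = 0" if "i \<in> {0..n} - ?h ` ?B" for i
  proof (cases "i = 0")
    case True then show ?thesis using assms by simp
  next
    case False
    have "odd (n - i)"
    proof
      assume "even (n - i)"
      then obtain b where "n - i = 2*b" by (rule evenE)
      then have "b \<in> ?B" "i = ?h b" using that False by auto
      then show False using that by blast
    qed
    then obtain k where "n - i = 2*k+1" by (rule oddE)
    then have "fps_nth (yy^i) n = 0" using yy_pow_nth[of i n] uu_pow_odd[of i k] that by simp
    then show ?thesis by simp
  qed
  have "fps_nth (fps_compose T yy) n = sum ?f {0..n}" by (simp add: fps_compose_nth)
  also have "\<dots> = sum ?f (?h ` ?B)"
    by (rule sum.mono_neutral_right) (use sub zero in auto)
  also have "\<dots> = sum (?f \<circ> ?h) ?B"
    by (rule sum.reindex) (auto simp: inj_on_def)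
  also have "\<dots> = (\<Sum>b\<in>?B. (-1)^b * real (n-b-1 choose b) * real_of_int (t (n-2*b)))"
  proof (rule sum.cong[OF refl])
    fix b assume b: "b \<in> ?B"
    then have i1: "n - 2*b \<noteq> 0" by auto
    have "fps_nth (yy^(n-2*b)) n = fps_nth (uu^(n-2*b)) (2*b)" using yy_pow_nth[of "n-2*b" n] b by auto
    also have "\<dots> = (-1)^b * real (n - 2*b + b - 1 choose b)" by (rule uu_pow_even)
    also have "n - 2*b + b - 1 = n-b-1" using b by auto
    finally show "(?f \<circ> ?h) b = (-1)^b * real (n-b-1 choose b) * real_of_int (t (n-2*b))"
      using i1 by (simp add: T_nth)
  qed
  finally show ?thesis .
qed

lemma main_coeff: "fps_nth (fps_X ^ 3 * fps_deriv T) n = fps_nth (1 + fps_X - fps_compose T yy) n"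
proof -
  consider "n = 0" | "n = 1" | "n \<ge> 2" by linarith
  then show ?thesis
  proof cases
    case 1 then show ?thesis by (simp add: fps_X_power_mult_nth T_nth)
  next
    case 2
    have "{b. 2*b+1 \<le> (1::nat)} = {0}" by auto
    then have "fps_nth (fps_compose T yy) 1 = 1" using compose_nth[of 1] t_small by simp
    then show ?thesis using 2 by (simp add: fps_X_power_mult_nth)
  next
    case 3
    let ?h = "\<lambda>b. (-1)^b * real (n-b-1 choose b) * real_of_int (t (n-2*b))"
    let ?B2 = "{b. 2 \<le> b \<and> 2*b+1 \<le> n}"
    have s2: "sum ?h ?B2 = - real_of_int (t n)"
    proof -
      have "real_of_int (t n) = - real_of_int (\<Sum>b\<in>?B2. (-1)^b * int (n-b-1 choose b) * t (n-2*b))"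
        using t_rec2[OF 3] by simp
      also have "\<dots> = - sum ?h ?B2" by simp
      finally show ?thesis by simp
    qed
    have fB2: "finite ?B2" by (rule finite_subset[of _ "{..n}"]) auto
    have h0: "?h 0 = real_of_int (t n)" by simp
    have "fps_nth (fps_compose T yy) n = (if n \<ge> 3 then - (real n - 2) * real_of_int (t (n-2)) else 0)"
    proof (cases "n \<ge> 3")
      case True
      have B: "{b. 2*b+1 \<le> n} = insert 0 (insert 1 ?B2)" using True by auto
      have h1: "?h 1 = - (real n - 2) * real_of_int (t (n-2))"
      proof -
        have "n - 1 - 1 = n - 2" by simp
        then have "real (n - 1 - 1 choose 1) = real n - 2" using True by simp
        then show ?thesis by simp
      qed
      have "fps_nth (fps_compose T yy) n = sum ?h {b. 2*b+1 \<le> n}" using compose_nth 3 by simp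
      also have "\<dots> = ?h 0 + (?h 1 + sum ?h ?B2)" unfolding B using fB2 by simp
      finally have "fps_nth (fps_compose T yy) n = ?h 0 + (?h 1 + sum ?h ?B2)" .
      then show ?thesis using True h0 h1 s2 by simp
    next
      case False
      then have "n = 2" using 3 by simp
      have B: "{b. 2*b+1 \<le> n} = {0}" using \<open>n = 2\<close> by auto
      have "fps_nth (fps_compose T yy) n = sum ?h {b. 2*b+1 \<le> n}" using compose_nth 3 by simp
      then show ?thesis using B \<open>n = 2\<close> t_small by simp
    qed
    moreover have "fps_nth (fps_X ^ 3 * fps_deriv T) n = (if n \<ge> 3 then (real n - 2) * real_of_int (t (n-2)) else 0)"
    proof (cases "n \<ge> 3")
      case True
      then have "n - 3 + 1 = n - 2" "n - 2 \<noteq> 0" by auto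
      then show ?thesis using True by (simp add: fps_X_power_mult_nth T_nth of_nat_diff)
    next
      case False then show ?thesis by (simp add: fps_X_power_mult_nth)
    qed
    ultimately show ?thesis using 3 by (simp add: algebra_simps)
  qed
qed

theorem theorem3p8:
  shows "fps_X ^ 3 * fps_deriv T = 1 + fps_X - fps_compose T (fps_X / (1 + fps_X ^ 2))
         \<and> fps_nth T 0 = 1"
proof
  show "fps_X ^ 3 * fps_deriv T = 1 + fps_X - fps_compose T (fps_X / (1 + fps_X ^ 2))"
    using main_coeff unfolding yy_def by (intro fps_ext) simp
  show "fps_nth T 0 = 1" by (simp add: T_nth)
qed


end
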